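(* For all positive integers $n$ and non-negative integers $k$, $$\det_{0\le i,j\le n-1}\Big(\sum_{l=0}^k\binom{i+j}{\lfloor\frac12(i+j+1-k)\rfloor+l}\Big)= \begin{cases}(-1)^{n_1\binom{k+1}2}, & n=(k+1)n_1,\\ (-1)^{n_1\binom{k+1}2}, & n=(k+1)n_1+1,\\ 0, & n\not\equiv0,1\pmod{k+1},\end{cases}$$ where $n_1$ is a non-negative integer and, when $k=0$ and both of the first two cases apply, the first one is meant.
   Context: Binomial coefficients $\binom ab$ (with $a\ge0$) are $0$ if $b<0$ or $b>a$. *)

theory Defs
  imports "Jordan_Normal_Form.Determinant"
begin

definition binom_int :: "nat \<Rightarrow> int \<Rightarrow> int" where
  "binom_int a b = (if b < 0 then 0 else int (a choose nat b))"

end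

theory Submission
  imports Defs "HOL-Library.Poly_Mapping"
begin

type_synonym R = "int \<Rightarrow>\<^sub>0 int"
abbreviation lk :: "R \<Rightarrow> int \<Rightarrow> int" where "lk \<equiv> Poly_Mapping.lookup"
definition Zm :: "int \<Rightarrow> R" where "Zm a = Poly_Mapping.single a 1"

lemma lookup_mult_Zm: "lk (F * Zm a) x = lk F (x - a)"
  unfolding Zm_def
proof (transfer fixing: a x)
  fix f :: "int \<Rightarrow> int"
  assume "finite {x. f x \<noteq> 0}"
  have 1: "Sum_any (\<lambda>ab. if x = aa + ab then if a = ab then 1 else 0 else (0::int)) = (if aa = x - a then 1 else (0::int))" for aa
  proof -
    have "Sum_any (\<lambda>ab. if x = aa + ab then if a = ab then 1 else 0 else (0::int)) = Sum_any (\<lambda>ab. if ab = a then (if x = aa + ab then 1 else 0) else (0::int))"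
      by (rule Sum_any.cong) auto
    also have "\<dots> = (if x = aa + a then 1 else 0)" by simp
    finally show ?thesis by auto
  qed
  have "Sum_any (\<lambda>aa. f aa * Sum_any (\<lambda>ab. if x = aa + ab then if a = ab then 1 else 0 else 0)) = Sum_any (\<lambda>aa. if aa = x - a then f aa else 0)"
    by (rule Sum_any.cong) (simp add: 1)
  also have "\<dots> = f (x - a)" by simp
  finally show "prod_fun f (\<lambda>k'. 1 when a = k') x = f (x - a)"
    unfolding prod_fun_def by (simp add: when_def)
qed

lemma lookup_of_int_mult: "lk (of_int c * F) x = c * lk F x"
proof -
  have e: "(of_int c :: R) = Poly_Mapping.single 0 c" by (metis single_of_int of_int_eq_id id_apply)
  have "of_int c * F = Poly_Mapping.map ((*) c) F"
    unfolding e by (simp add: mult_map_scale_conv_mult)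
  thus ?thesis by (simp add: Poly_Mapping.map.rep_eq when_def)
qed

lemma Zm_mult: "Zm a * Zm b = Zm (a + b)" unfolding Zm_def by (simp add: mult_single)
lemma Zm_0: "Zm 0 = 1" unfolding Zm_def by simp
lemma Zm_pow: "Zm a ^ r = Zm (int r * a)"
  by (induction r) (auto simp: Zm_0 Zm_mult algebra_simps)
lemma lk_Zm: "lk (Zm a) x = (if a = x then 1 else 0)" unfolding Zm_def by (simp add: lookup_single when_def)



definition Y :: R where "Y = Zm 2 + Zm (-2)"

definition bb :: "nat \<Rightarrow> int \<Rightarrow> int" where "bb m s = lk (Y ^ m) (2 * s)"

lemma lk_sum: "lk (\<Sum>x\<in>A. f x) y = (\<Sum>x\<in>A. lk (f x) y)"
  by (simp add: lookup_sum)

lemma of_nat_R: "(of_nat c :: R) = of_int (int c)" by simp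

lemma lookup_of_nat_mult: "lk (of_nat c * F) x = int c * lk F x"
  using lookup_of_int_mult[of "int c" F x] by simp

lemma lk_Ypow: "lk (Y ^ m) x = (\<Sum>r\<le>m. if 4 * int r - 2 * int m = x then int (m choose r) else 0)"
proof -
  have "Y ^ m = (\<Sum>r\<le>m. of_nat (m choose r) * Zm 2 ^ r * Zm (-2) ^ (m - r))"
    unfolding Y_def by (rule binomial_ring)
  also have "\<dots> = (\<Sum>r\<le>m. of_int (int (m choose r)) * Zm (4 * int r - 2 * int m))"
  proof (rule sum.cong[OF refl])
    fix r assume "r \<in> {..m}"
    hence "int (m - r) = int m - int r" by auto
    hence "Zm 2 ^ r * Zm (-2) ^ (m - r) = Zm (4 * int r - 2 * int m)"
      by (simp add: Zm_pow Zm_mult algebra_simps)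
    thus "of_nat (m choose r) * Zm 2 ^ r * Zm (- 2) ^ (m - r) = of_int (int (m choose r)) * Zm (4 * int r - 2 * int m)"
      by (simp add: mult.assoc)
  qed
  finally have "lk (Y ^ m) x = (\<Sum>r\<le>m. int (m choose r) * (if 4 * int r - 2 * int m = x then 1 else 0))"
    by (simp add: lk_sum lookup_of_nat_mult lk_Zm)
  also have "\<dots> = (\<Sum>r\<le>m. if 4 * int r - 2 * int m = x then int (m choose r) else 0)"
    by (rule sum.cong) simp_all
  finally show ?thesis .
qed




lemma bb_formula: "bb m s = (if even (int m + s) then binom_int m ((int m + s) div 2) else 0)"
proof -
  have bbs: "bb m s = (\<Sum>r\<le>m. if 4 * int r - 2 * int m = 2 * s then int (m choose r) else 0)"
    unfolding bb_def lk_Ypow ..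
  show ?thesis
  proof (cases "even (int m + s)")
    case False
    have "4 * int r - 2 * int m \<noteq> 2 * s" for r
    proof
      assume "4 * int r - 2 * int m = 2 * s"
      hence "int m + s = 2 * int r" by linarith
      with False show False by simp
    qed
    thus ?thesis using False bbs by simp
  next
    case True
    define t where "t = (int m + s) div 2"
    have ts: "int m + s = 2 * t" using True t_def by auto
    have c: "(4 * int r - 2 * int m = 2 * s) \<longleftrightarrow> int r = t" for r using ts by linarith
    have "bb m s = (\<Sum>r\<le>m. if int r = t then int (m choose r) else 0)"
      using bbs c by simp
    also have "\<dots> = binom_int m t"
    proof (cases "t < 0")
      case True thus ?thesis unfolding binom_int_def by (auto intro!: sum.neutral)
    next
      case False
      have "(\<Sum>r\<le>m. if int r = t then int (m choose r) else 0) = (\<Sum>r\<le>m. if r = nat t then int (m choose r) else 0)"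
        by (rule sum.cong[OF refl]) (use False in force)
      hence "(\<Sum>r\<le>m. if int r = t then int (m choose r) else 0) = (if nat t \<le> m then int (m choose nat t) else 0)"
        by (simp add: sum.delta)
      also have "\<dots> = binom_int m t" using False unfolding binom_int_def by auto
      finally show ?thesis .
    qed
    finally show ?thesis using True t_def by simp
  qed
qed



lemma binom_int_sym: "binom_int m (int m - t) = binom_int m t"
proof (cases "t < 0")
  case True thus ?thesis unfolding binom_int_def by auto
next
  case False
  show ?thesis
  proof (cases "t \<le> int m")
    case True
    have e: "nat (int m - t) = m - nat t" using True False by auto
    have "m choose (m - nat t) = m choose nat t"
      using binomial_symmetric[of "nat t" m] True False by linarith
    thus ?thesis using True False e unfolding binom_int_def by simp
  qed (use False in \<open>auto simp: binom_int_def\<close>)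
qed

lemma bb_sym: "bb m (- s) = bb m s"
proof (cases "even (int m + s)")
  case True
  define q where "q = (int m + s) div 2"
  have q: "int m + s = 2 * q" using True unfolding q_def by simp
  have q2: "int m + - s = 2 * (int m - q)" using q by simp
  have "bb m (- s) = binom_int m (int m - q)"
    unfolding bb_formula q2 by simp
  also have "\<dots> = binom_int m q" by (rule binom_int_sym)
  also have "\<dots> = bb m s" unfolding bb_formula q by simp
  finally show ?thesis .
next
  case False
  have "odd (int m + - s)" using False by presburger
  thus ?thesis unfolding bb_formula using False by simp
qed



definition P1z :: R where "P1z = Zm 1 + Zm (-1)"
definition EE :: "nat \<Rightarrow> R" where "EE j = Zm (2 * int j + 1) + Zm (- (2 * int j + 1))"

fun V :: "nat \<Rightarrow> R" where
  "V 0 = 1"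
| "V (Suc 0) = Y - 1"
| "V (Suc (Suc j)) = Y * V (Suc j) - V j"

lemma Zm_add: "Zm a * Zm b = Zm (a + b)" by (rule Zm_mult)

lemma PV: "P1z * V j = EE j"
proof (induction j rule: V.induct)
  case 1 thus ?case by (simp add: P1z_def EE_def)
next
  case 2
  have "P1z * V (Suc 0) = Zm 1 * Zm 2 + Zm 1 * Zm (-2) - Zm 1 + (Zm (-1) * Zm 2 + Zm (-1) * Zm (-2) - Zm (-1))"
    by (simp add: P1z_def Y_def algebra_simps)
  also have "\<dots> = Zm 3 + Zm (-3)" by (simp add: Zm_add)
  finally show ?case by (simp add: EE_def)
next
  case (3 j)
  have "P1z * V (Suc (Suc j)) = Y * (P1z * V (Suc j)) - P1z * V j" by (simp add: algebra_simps)
  also have "\<dots> = Y * EE (Suc j) - EE j" using 3 by simp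
  also have "\<dots> = Zm 2 * Zm (2 * int j + 3) + Zm 2 * Zm (- (2 * int j + 3)) + Zm (-2) * Zm (2 * int j + 3) + Zm (-2) * Zm (- (2 * int j + 3)) - EE j"
    by (simp add: Y_def EE_def algebra_simps)
  also have "\<dots> = Zm (2 * int j + 5) + Zm (- (2 * int j + 5))"
    by (simp add: Zm_add EE_def algebra_simps)
  also have "\<dots> = EE (Suc (Suc j))" by (simp add: EE_def algebra_simps)
  finally show ?case .
qed

definition ff :: "nat \<Rightarrow> R" where
  "ff i = (if i = 0 then 1 else if i = 1 then V 1 - V 0 else V i - V (i - 2))"

definition Ai :: "nat \<Rightarrow> R" where "Ai i = Zm (2 * int i - 1) - Zm (1 - 2 * int i)"

lemma Pf: assumes "i \<ge> 1" shows "P1z * ff i = (Zm 2 - Zm (-2)) * Ai i"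
proof (cases "i = 1")
  case True
  have "P1z * ff i = P1z * V 1 - P1z * V 0" using True by (simp add: ff_def right_diff_distrib del: V.simps)
  also have "\<dots> = EE 1 - EE 0" by (simp only: PV)
  also have "\<dots> = (Zm 2 - Zm (-2)) * Ai i"
    using True by (simp add: EE_def Ai_def algebra_simps Zm_add)
  finally show ?thesis .
next
  case False
  then obtain q where q: "i = Suc (Suc q)" using assms by (cases i; cases "i - 1") auto
  have "P1z * ff i = P1z * V (Suc (Suc q)) - P1z * V q" using q by (simp add: ff_def right_diff_distrib del: V.simps)
  also have "\<dots> = EE (Suc (Suc q)) - EE q" by (simp only: PV)
  also have "\<dots> = (Zm 2 - Zm (-2)) * Ai i"
    using q by (simp add: EE_def Ai_def algebra_simps Zm_add)
  finally show ?thesis .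
qed

fun U :: "nat \<Rightarrow> R" where
  "U 0 = 1"
| "U (Suc k) = Zm (2 * int (Suc k)) + Zm (-2) * U k"

lemma DU: "(Zm 2 - Zm (-2)) * U k = Zm (2 * int k + 2) - Zm (- (2 * int k + 2))"
proof (induction k)
  case 0 thus ?case by simp
next
  case (Suc k)
  have "(Zm 2 - Zm (-2)) * U (Suc k) = (Zm 2 - Zm (-2)) * Zm (2 * int (Suc k)) + Zm (-2) * ((Zm 2 - Zm (-2)) * U k)"
    by (simp add: algebra_simps)
  also have "\<dots> = (Zm 2 - Zm (-2)) * Zm (2 * int (Suc k)) + Zm (-2) * (Zm (2 * int k + 2) - Zm (- (2 * int k + 2)))"
    using Suc by simp
  also have "\<dots> = Zm (2 * int (Suc k) + 2) - Zm (- (2 * int (Suc k) + 2))"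
    by (simp add: algebra_simps Zm_add)
  finally show ?case .
qed

definition Kk :: "nat \<Rightarrow> R" where "Kk k = (\<Sum>t<2*k+2. Zm (2 * int t - 2 * int k))"

lemma KU: "(1 + Zm 2) * U k = Kk k"
proof (induction k)
  case 0 thus ?case by (simp add: Kk_def numeral_2_eq_2 Zm_0)
next
  case (Suc k)
  have "(1 + Zm 2) * U (Suc k) = Zm (2 * int k + 2) + Zm (2 * int k + 4) + Zm (-2) * ((1 + Zm 2) * U k)"
    by (simp add: algebra_simps Zm_add)
  also have "\<dots> = Zm (2 * int k + 2) + Zm (2 * int k + 4) + Zm (-2) * Kk k" using Suc by simp
  also have "Zm (-2) * Kk k = (\<Sum>t<2*k+2. Zm (2 * int t - 2 * int (Suc k)))"
    unfolding Kk_def sum_distrib_left by (rule sum.cong) (simp_all add: Zm_add algebra_simps)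
  finally have a: "(1 + Zm 2) * U (Suc k) = Zm (2 * int k + 2) + Zm (2 * int k + 4) + (\<Sum>t<2*k+2. Zm (2 * int t - 2 * int (Suc k)))" .
  have "Kk (Suc k) = (\<Sum>t<2*k+2. Zm (2 * int t - 2 * int (Suc k))) + Zm (2 * int k + 2) + Zm (2 * int k + 4)"
    unfolding Kk_def by (simp add: algebra_simps)
  with a show ?case by (simp add: algebra_simps)
qed

definition Wt :: "nat \<Rightarrow> R" where "Wt k = P1z ^ 2 * U k"
definition L2 :: "nat \<Rightarrow> R \<Rightarrow> int" where "L2 k F = lk (F * Wt k) 0"

lemma Wt_K: "Wt k = (1 + Zm (-2)) * Kk k"
proof -
  have "P1z ^ 2 = (1 + Zm (-2)) * (1 + Zm 2)"
    by (simp add: P1z_def power2_eq_square algebra_simps Zm_add Zm_0)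
  thus ?thesis unfolding Wt_def by (simp add: KU[symmetric] mult.assoc)
qed

lemma L2_add: "L2 k (F + G) = L2 k F + L2 k G"
  unfolding L2_def by (simp add: distrib_right lookup_add)
lemma L2_diff: "L2 k (F - G) = L2 k F - L2 k G"
  unfolding L2_def by (simp add: left_diff_distrib lookup_minus)

lemma mult_sum_Zm: "F * (\<Sum>t<N. Zm (g t)) = (\<Sum>t<N. F * Zm (g t))"
  by (simp add: sum_distrib_left)

lemma L2_formula: "L2 k F = (\<Sum>t<2*k+2. lk F (2 * int k - 2 * int t)) + (\<Sum>t<2*k+2. lk F (2 * int k + 2 - 2 * int t))"
proof -
  have gen: "lk (F * ((1 + Zm (-2)) * (\<Sum>t<N. Zm (2 * int t - 2 * int k)))) 0 =
     (\<Sum>t<N. lk F (2 * int k - 2 * int t)) + (\<Sum>t<N. lk F (2 * int k + 2 - 2 * int t))" for N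
  proof -
    have "F * ((1 + Zm (-2)) * (\<Sum>t<N. Zm (2 * int t - 2 * int k))) =
      (\<Sum>t<N. F * Zm (2 * int t - 2 * int k)) + (\<Sum>t<N. (F * Zm (-2)) * Zm (2 * int t - 2 * int k))"
    proof -
      have e: "F * ((1 + Zm (-2)) * S) = F * S + (F * Zm (-2)) * S" for S by (simp add: algebra_simps)
      show ?thesis unfolding e by (simp only: sum_distrib_left)
    qed
    thus ?thesis by (simp add: lookup_add lk_sum lookup_mult_Zm Zm_add algebra_simps)
  qed
  show ?thesis unfolding L2_def Wt_K Kk_def by (rule gen)
qed




definition aa :: "nat \<Rightarrow> nat \<Rightarrow> int" where
  "aa k m = (\<Sum>l = 0..k. binom_int m ((int m + 1 - int k) div 2 + int l))"

lemma sum_pairs: "(\<Sum>t<2*(n::nat). g t) = (\<Sum>u<n. g (2*u) + g (2*u+1))"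
  by (induction n) (simp_all add: algebra_simps)

lemma L2_Ypow: "L2 k (Y ^ m) = 2 * aa k m"
proof -
  define N where "N = 2*k+2"
  have L: "L2 k (Y ^ m) = (\<Sum>t<N. bb m (int k - int t)) + (\<Sum>t<N. bb m (int k + 1 - int t))"
    unfolding L2_formula N_def bb_def by (simp add: algebra_simps)
  have S12: "(\<Sum>t<N. bb m (int k - int t)) = (\<Sum>t<N. bb m (int k + 1 - int t))"
  proof -
    have "(\<Sum>t<N. bb m (int k + 1 - int t)) = (\<Sum>i<N. bb m (int k + 1 - int (N - Suc i)))"
      by (rule sum.nat_diff_reindex[symmetric])
    also have "\<dots> = (\<Sum>i<N. bb m (int k - int i))"
    proof (rule sum.cong[OF refl])
      fix i assume "i \<in> {..<N}"
      hence "int (N - Suc i) = 2 * int k + 1 - int i" unfolding N_def by auto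
      hence "int k + 1 - int (N - Suc i) = - (int k - int i)" by linarith
      thus "bb m (int k + 1 - int (N - Suc i)) = bb m (int k - int i)" by (metis bb_sym)
    qed
    finally show ?thesis by simp
  qed
  define c where "c = (int m + int k + 1) div 2"
  have pair: "bb m (int k + 1 - int (2*u)) + bb m (int k + 1 - int (2*u+1)) = binom_int m (c - int u)" for u
  proof (cases "even (int m + int k + 1)")
    case True
    hence o: "odd (int m + (int k - 2 * int u))" by presburger
    have e: "even (int m + (int k + 1 - 2 * int u))" using True by presburger
    have "(int m + (int k + 1 - 2 * int u)) div 2 = c - int u"
      unfolding c_def by (simp add: algebra_simps)
    thus ?thesis using o e unfolding bb_formula by simp
  next
    case False
    hence o: "odd (int m + (int k + 1 - 2 * int u))" by presburger
    have e: "even (int m + (int k - 2 * int u))" using False by presburger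
    have "(int m + (int k - 2 * int u)) div 2 = c - int u"
    proof -
      have "int m + int k + 1 = (int m + int k) + 1" by simp
      hence "c = (int m + int k) div 2" unfolding c_def using e by presburger
      thus ?thesis by (simp add: algebra_simps)
    qed
    thus ?thesis using o e unfolding bb_formula by simp
  qed
  have S2: "(\<Sum>t<N. bb m (int k + 1 - int t)) = (\<Sum>u<k+1. binom_int m (c - int u))"
  proof -
    have "(\<Sum>t<N. bb m (int k + 1 - int t)) = (\<Sum>u<k+1. bb m (int k + 1 - int (2*u)) + bb m (int k + 1 - int (2*u+1)))"
      unfolding N_def using sum_pairs[of "\<lambda>t. bb m (int k + 1 - int t)" "k+1"] by (simp add: algebra_simps)
    also have "\<dots> = (\<Sum>u<k+1. binom_int m (c - int u))"
      by (rule sum.cong[OF refl]) (rule pair)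
    finally show ?thesis .
  qed
  have S3: "(\<Sum>u<k+1. binom_int m (c - int u)) = aa k m"
  proof -
    have cJ: "c = (int m + 1 - int k) div 2 + int k"
    proof -
      have "int m + int k + 1 = (int m + 1 - int k) + 2 * int k" by simp
      thus ?thesis unfolding c_def by simp
    qed
    have "aa k m = (\<Sum>l<k+1. binom_int m ((int m + 1 - int k) div 2 + int l))"
      unfolding aa_def by (rule sum.cong) auto
    also have "\<dots> = (\<Sum>i<k+1. binom_int m ((int m + 1 - int k) div 2 + int (k + 1 - Suc i)))"
      by (rule sum.nat_diff_reindex[symmetric])
    also have "\<dots> = (\<Sum>u<k+1. binom_int m (c - int u))"
      by (rule sum.cong) (auto simp: cJ of_nat_diff algebra_simps)
    finally show ?thesis by simp
  qed
  show ?thesis using L S12 S2 S3 by simp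
qed




lemma ind_sum: "(\<Sum>t<N. (if int t = c then (1::int) else 0)) = (if 0 \<le> c \<and> c < int N then 1 else 0)"
proof (cases "0 \<le> c")
  case True
  have "(\<Sum>t<N. (if int t = c then (1::int) else 0)) = (\<Sum>t<N. (if t = nat c then (1::int) else 0))"
    by (rule sum.cong[OF refl]) (use True in auto)
  also have "\<dots> = (if nat c < N then 1 else 0)" by (simp add: sum.delta)
  finally show ?thesis using True by auto
next
  case False
  thus ?thesis by (auto intro!: sum.neutral)
qed

lemma L2_V: "L2 k (V j) = (if j \<le> k then 2 else 0)"
proof -
  have P: "P1z = Zm (-1) * (1 + Zm 2)" by (simp add: P1z_def algebra_simps Zm_add)
  have "V j * Wt k = (P1z * V j) * (Zm (-1) * ((1 + Zm 2) * U k))"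
    unfolding Wt_def power2_eq_square by (simp add: P mult_ac)
  also have "\<dots> = EE j * Zm (-1) * ((1 + Zm 2) * U k)" by (simp add: PV mult_ac)
  also have "\<dots> = EE j * Zm (-1) * Kk k" by (simp only: KU)
  also have "\<dots> = (\<Sum>t<2*k+2. EE j * Zm (2 * int t - 2 * int k - 1))"
    unfolding Kk_def sum_distrib_left by (rule sum.cong) (simp_all add: mult.assoc Zm_add algebra_simps)
  finally have "L2 k (V j) = (\<Sum>t<2*k+2. lk (EE j * Zm (2 * int t - 2 * int k - 1)) 0)"
    unfolding L2_def by (simp only: lk_sum)
  also have "\<dots> = (\<Sum>t<2*k+2. lk (EE j) (2 * int k + 1 - 2 * int t))"
    by (rule sum.cong[OF refl]) (simp add: lookup_mult_Zm algebra_simps)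
  also have "\<dots> = (\<Sum>t<2*k+2. (if int t = int k - int j then 1 else 0) + (if int t = int k + int j + 1 then 1 else 0))"
    by (rule sum.cong) (auto simp: EE_def lookup_add lk_Zm)
  also have "\<dots> = (if j \<le> k then 2 else 0)"
    by (simp add: sum.distrib ind_sum)
  finally show ?thesis .
qed

lemma L2_ffV: assumes "i \<ge> 1"
  shows "L2 k (ff i * V j) = 2 * ((if j = i + k then 1 else 0) - (if i + j = k + 1 then 1 else 0) - (if i = j + k + 2 then 1 else 0))"
proof -
  have "ff i * V j * Wt k = Ai i * EE j * ((Zm 2 - Zm (-2)) * U k)"
  proof -
    have "ff i * V j * Wt k = (P1z * ff i) * (P1z * V j) * U k"
      unfolding Wt_def power2_eq_square by (simp add: mult_ac)
    also have "\<dots> = Ai i * EE j * ((Zm 2 - Zm (-2)) * U k)"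
      using Pf[OF assms] PV by (simp add: mult_ac)
    finally show ?thesis .
  qed
  also have "\<dots> = Ai i * EE j * (Zm (2 * int k + 2) - Zm (- (2 * int k + 2)))" by (simp add: DU)
  finally have e: "ff i * V j * Wt k = Ai i * EE j * (Zm (2 * int k + 2) - Zm (- (2 * int k + 2)))" .
  show ?thesis unfolding L2_def e
    by (simp add: Ai_def EE_def algebra_simps Zm_add lookup_add lookup_minus lk_Zm)
qed




function fp :: "nat \<Rightarrow> nat \<Rightarrow> R" where
  "fp k i = (if i = 0 then 1 else ff i + (if 2*k+2 < i then fp k (i - (2*k+2)) else 0))"
  by pat_completeness auto
termination by (relation "measure snd") auto

declare fp.simps[simp del]

definition cc :: "nat \<Rightarrow> nat \<Rightarrow> nat" where
  "cc k i = (let r = (i - 1) mod (2*k+2) in if r \<le> k then k - r else r - k - 1)"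

lemma L2_fpV: "i \<ge> 1 \<Longrightarrow> L2 k (fp k i * V j) = 2 * ((if j = i + k then 1 else 0) - (if j = cc k i then 1 else 0))"
proof (induction i rule: less_induct)
  case (less i)
  show ?case
  proof (cases "2*k+2 < i")
    case False
    hence fpi: "fp k i = ff i" using less.prems by (subst fp.simps) simp
    have "(i - 1) mod (2*k+2) = i - 1" using False by simp
    hence "cc k i = (if i - 1 \<le> k then k + 1 - i else i - k - 2)"
      unfolding cc_def Let_def using less.prems by auto
    thus ?thesis unfolding fpi L2_ffV[OF less.prems] using False less.prems by auto
  next
    case True
    let ?i = "i - (2*k+2)"
    have fpi: "fp k i = ff i + fp k ?i" using True by (subst fp.simps) simp
    have IH: "L2 k (fp k ?i * V j) = 2 * ((if j = ?i + k then 1 else 0) - (if j = cc k ?i then 1 else 0))"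
      using less.IH[of ?i] True by simp
    have "(i - 1) mod (2*k+2) = (?i - 1) mod (2*k+2)"
    proof -
      have "i - 1 = (?i - 1) + (2*k+2)" using True by simp
      thus ?thesis by (metis mod_add_self2)
    qed
    hence ccq: "cc k ?i = cc k i" unfolding cc_def by simp
    have "L2 k (fp k i * V j) = L2 k (ff i * V j) + L2 k (fp k ?i * V j)"
      unfolding fpi by (simp add: distrib_right L2_add)
    thus ?thesis unfolding IH L2_ffV[OF less.prems] ccq using True by auto
  qed
qed

lemma L2_fpV0: "L2 k (fp k 0 * V j) = (if j \<le> k then 2 else 0)"
  by (subst fp.simps) (simp add: L2_V)




definition Lin :: "nat \<Rightarrow> R \<Rightarrow> bool" where
  "Lin t F \<longleftrightarrow> (\<exists>\<beta>. F = (\<Sum>s<t. of_int (\<beta> s) * Y ^ s))"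

definition Mon :: "nat \<Rightarrow> R \<Rightarrow> bool" where "Mon i F \<longleftrightarrow> Lin i (F - Y ^ i)"

lemma Lin_0: "Lin t 0" unfolding Lin_def by (rule exI[of _ "\<lambda>_. 0"]) simp

lemma Lin_add: "Lin t F \<Longrightarrow> Lin t G \<Longrightarrow> Lin t (F + G)"
  unfolding Lin_def
proof (elim exE)
  fix \<beta> \<gamma> assume "F = (\<Sum>s<t. of_int (\<beta> s) * Y ^ s)" "G = (\<Sum>s<t. of_int (\<gamma> s) * Y ^ s)"
  thus "\<exists>\<delta>. F + G = (\<Sum>s<t. of_int (\<delta> s) * Y ^ s)"
    by (intro exI[of _ "\<lambda>s. \<beta> s + \<gamma> s"]) (simp add: sum.distrib distrib_right)
qed

lemma Lin_uminus: "Lin t F \<Longrightarrow> Lin t (- F)"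
  unfolding Lin_def
proof (elim exE)
  fix \<beta> assume "F = (\<Sum>s<t. of_int (\<beta> s) * Y ^ s)"
  thus "\<exists>\<delta>. - F = (\<Sum>s<t. of_int (\<delta> s) * Y ^ s)"
    by (intro exI[of _ "\<lambda>s. - \<beta> s"]) (simp add: sum_negf)
qed

lemma Lin_diff: "Lin t F \<Longrightarrow> Lin t G \<Longrightarrow> Lin t (F - G)"
  using Lin_add[of t F "- G"] Lin_uminus[of t G] by simp

lemma Lin_mono: assumes "Lin s F" "s \<le> t" shows "Lin t F"
proof -
  from assms(1) obtain \<beta> where b: "F = (\<Sum>r<s. of_int (\<beta> r) * Y ^ r)" unfolding Lin_def by blast
  have "(\<Sum>r<t. of_int (if r < s then \<beta> r else 0) * Y ^ r) = (\<Sum>r<s. of_int (if r < s then \<beta> r else 0) * Y ^ r)"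
    by (rule sum.mono_neutral_right) (use assms(2) in auto)
  also have "\<dots> = F" unfolding b by (rule sum.cong) auto
  finally show ?thesis unfolding Lin_def by (intro exI[of _ "\<lambda>r. if r < s then \<beta> r else 0"]) simp
qed

lemma Lin_Y: assumes "Lin t F" shows "Lin (Suc t) (Y * F)"
proof -
  from assms obtain \<beta> where b: "F = (\<Sum>r<t. of_int (\<beta> r) * Y ^ r)" unfolding Lin_def by blast
  define \<gamma> where "\<gamma> = (\<lambda>r. if r = 0 then 0 else \<beta> (r - 1))"
  have "(\<Sum>r<Suc t. of_int (\<gamma> r) * Y ^ r) = (\<Sum>r<t. of_int (\<gamma> (Suc r)) * Y ^ Suc r)"
    unfolding sum.lessThan_Suc_shift by (simp add: \<gamma>_def)
  also have "\<dots> = Y * F" unfolding b sum_distrib_left by (rule sum.cong) (auto simp: \<gamma>_def mult_ac)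
  finally show ?thesis unfolding Lin_def by metis
qed

lemma Lin_pow: "i < t \<Longrightarrow> Lin t (Y ^ i)"
proof -
  assume "i < t"
  have "(\<Sum>r<t. of_int (if r = i then 1 else 0) * Y ^ r) = (\<Sum>r<t. if r = i then Y ^ r else 0)"
    by (rule sum.cong) auto
  also have "\<dots> = Y ^ i" using \<open>i < t\<close> by (simp add: sum.delta)
  finally have "(\<Sum>r<t. of_int (if r = i then 1 else 0) * Y ^ r) = Y ^ i" .
  thus ?thesis unfolding Lin_def by metis
qed

lemma Mon_Lin: "Mon i F \<Longrightarrow> Lin (Suc i) F"
  unfolding Mon_def using Lin_add[of "Suc i" "F - Y ^ i" "Y ^ i"] Lin_mono[of i "F - Y^i" "Suc i"] Lin_pow[of i "Suc i"]
  by simp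

lemma Mon_V: "Mon j (V j)"
proof (induction j rule: V.induct)
  case 1 thus ?case by (simp add: Mon_def Lin_0)
next
  case 2
  have "V (Suc 0) - Y ^ Suc 0 = - (Y ^ 0)" by simp
  thus ?case unfolding Mon_def using Lin_uminus[OF Lin_pow[of 0 1]] by simp
next
  case (3 j)
  have e: "V (Suc (Suc j)) - Y ^ Suc (Suc j) = Y * (V (Suc j) - Y ^ Suc j) - V j"
    by (simp add: algebra_simps)
  have a: "Lin (Suc (Suc j)) (Y * (V (Suc j) - Y ^ Suc j))"
    using 3(1) unfolding Mon_def by (rule Lin_Y)
  have b: "Lin (Suc (Suc j)) (V j)" using Lin_mono[OF Mon_Lin[OF 3(2)]] by simp
  show ?case unfolding Mon_def e by (rule Lin_diff[OF a b])
qed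

lemma Mon_ff: "Mon i (ff i)"
proof -
  consider "i = 0" | "i = 1" | q where "i = Suc (Suc q)" by (cases i; cases "i - 1") auto
  thus ?thesis
  proof cases
    case 1 thus ?thesis by (simp add: ff_def Mon_def Lin_0)
  next
    case 2
    have e: "ff 1 - Y ^ 1 = (V 1 - Y ^ 1) - V 0" by (simp add: ff_def del: V.simps)
    have a: "Lin 1 (V 1 - Y ^ 1)" using Mon_V[of 1] unfolding Mon_def .
    have b: "Lin 1 (V 0)" using Mon_Lin[OF Mon_V[of 0]] by simp
    show ?thesis unfolding Mon_def 2 e by (rule Lin_diff[OF a b])
  next
    case 3
    have e: "ff i - Y ^ i = (V i - Y ^ i) - V q" using 3 by (simp add: ff_def del: V.simps)
    have a: "Lin i (V i - Y ^ i)" using Mon_V[of i] unfolding Mon_def .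
    have b: "Lin i (V q)" using Lin_mono[OF Mon_Lin[OF Mon_V[of q]]] 3 by simp
    show ?thesis unfolding Mon_def e by (rule Lin_diff[OF a b])
  qed
qed

lemma Mon_fp: "Mon i (fp k i)"
proof (induction i rule: less_induct)
  case (less i)
  show ?case
  proof (cases "i = 0")
    case True thus ?thesis by (subst fp.simps) (simp add: Mon_def Lin_0)
  next
    case False
    show ?thesis
    proof (cases "2*k+2 < i")
      case True
      have e: "fp k i - Y ^ i = (ff i - Y ^ i) + fp k (i - (2*k+2))"
        using False True by (subst fp.simps) simp
      have "Lin i (fp k (i - (2*k+2)))"
        using Lin_mono[OF Mon_Lin[OF less.IH[of "i - (2*k+2)"]]] True by simp
      thus ?thesis unfolding Mon_def e using Mon_ff[of i] unfolding Mon_def by (intro Lin_add)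
    next
      case False2: False
      have "fp k i = ff i" using False False2 by (subst fp.simps) simp
      thus ?thesis using Mon_ff by simp
    qed
  qed
qed




lemma L2_lin: "L2 k ((\<Sum>s\<in>A. of_int (c s) * X s) * G) = (\<Sum>s\<in>A. c s * L2 k (X s * G))"
  unfolding L2_def by (simp add: sum_distrib_right lk_sum mult.assoc lookup_of_int_mult)

lemma gram_left:
  fixes b g :: "nat \<Rightarrow> R"
  assumes Mb: "\<And>i. i < n \<Longrightarrow> Mon i (b i)"
  shows "det (mat n n (\<lambda>(i,j). L2 k (b i * g j))) = det (mat n n (\<lambda>(i,j). L2 k (Y ^ i * g j)))"
proof -
  have "\<forall>i. \<exists>\<beta>. i < n \<longrightarrow> b i - Y ^ i = (\<Sum>s<i. of_int (\<beta> s) * Y ^ s)"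
    using Mb unfolding Mon_def Lin_def by blast
  then obtain B where B: "\<And>i. i < n \<Longrightarrow> b i - Y ^ i = (\<Sum>s<i. of_int (B i s) * Y ^ s)"
    by metis
  define coef where "coef = (\<lambda>i s. if s = i then 1 else if s < i then B i s else 0)"
  define Lm where "Lm = mat n n (\<lambda>(i,s). coef i s)"
  define G where "G = mat n n (\<lambda>(i,j). L2 k (Y ^ i * g j))"
  have bsum: "b i = (\<Sum>s<n. of_int (coef i s) * Y ^ s)" if i: "i < n" for i
  proof -
    have "(\<Sum>s<n. of_int (coef i s) * Y ^ s) = (\<Sum>s<Suc i. of_int (coef i s) * Y ^ s)"
      by (rule sum.mono_neutral_right) (use i in \<open>auto simp: coef_def\<close>)
    also have "\<dots> = (\<Sum>s<i. of_int (B i s) * Y ^ s) + Y ^ i"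
      by (simp add: coef_def)
    also have "\<dots> = b i" using B[OF i] by (simp add: algebra_simps)
    finally show ?thesis by simp
  qed
  have eq: "mat n n (\<lambda>(i,j). L2 k (b i * g j)) = Lm * G"
  proof (rule eq_matI)
    fix i j assume "i < dim_row (Lm * G)" "j < dim_col (Lm * G)"
    hence ij: "i < n" "j < n" unfolding Lm_def G_def by auto
    have "(Lm * G) $$ (i, j) = (\<Sum>s = 0..<n. coef i s * L2 k (Y ^ s * g j))"
      using ij unfolding Lm_def G_def by (simp add: scalar_prod_def)
    also have "\<dots> = L2 k ((\<Sum>s\<in>{0..<n}. of_int (coef i s) * Y ^ s) * g j)"
      by (rule L2_lin[symmetric])
    also have "\<dots> = L2 k (b i * g j)" using bsum[OF ij(1)] by (simp add: atLeast0LessThan)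
    finally show "mat n n (\<lambda>(i,j). L2 k (b i * g j)) $$ (i, j) = (Lm * G) $$ (i, j)" using ij by simp
  qed (auto simp: Lm_def G_def)
  have Lc: "Lm \<in> carrier_mat n n" and Gc: "G \<in> carrier_mat n n" unfolding Lm_def G_def by auto
  have "det Lm = prod_list (diag_mat Lm)"
    by (rule det_lower_triangular[OF _ Lc]) (auto simp: Lm_def coef_def)
  also have "diag_mat Lm = replicate n 1"
    by (rule nth_equalityI) (auto simp: diag_mat_def Lm_def coef_def)
  finally have "det Lm = 1" by simp
  moreover have "det (Lm * G) = det Lm * det G" by (rule det_mult[OF Lc Gc])
  ultimately have "det (mat n n (\<lambda>(i,j). L2 k (b i * g j))) = det G" using eq by simp
  thus ?thesis unfolding G_def .
qed

lemma gram_both: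
  fixes b c :: "nat \<Rightarrow> R"
  assumes Mb: "\<And>i. i < n \<Longrightarrow> Mon i (b i)" and Mc: "\<And>i. i < n \<Longrightarrow> Mon i (c i)"
  shows "det (mat n n (\<lambda>(i,j). L2 k (b i * c j))) = det (mat n n (\<lambda>(i,j). L2 k (Y ^ i * Y ^ j)))"
proof -
  have "det (mat n n (\<lambda>(i,j). L2 k (b i * c j))) = det (mat n n (\<lambda>(i,j). L2 k (Y ^ i * c j)))"
    by (rule gram_left[OF Mb])
  also have "\<dots> = det ((mat n n (\<lambda>(i,j). L2 k (Y ^ i * c j)))\<^sup>T)"
    by (rule det_transpose[symmetric]) auto
  also have "(mat n n (\<lambda>(i,j). L2 k (Y ^ i * c j)))\<^sup>T = mat n n (\<lambda>(i,j). L2 k (c i * Y ^ j))"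
    by (rule eq_matI) (auto simp: mult.commute)
  also have "det \<dots> = det (mat n n (\<lambda>(i,j). L2 k (Y ^ i * Y ^ j)))"
    by (rule gram_left[OF Mc])
  finally show ?thesis .
qed




definition Mp :: "nat \<Rightarrow> nat \<Rightarrow> int mat" where
  "Mp k n = mat n n (\<lambda>(i,j). if i = 0 then (if j \<le> k then 1 else 0)
      else (if j = i + k then 1 else 0) - (if j = cc k i then 1 else 0))"

lemma det_H_Mp:
  "det (mat n n (\<lambda>(i, j). \<Sum>l = 0..k.
            binom_int (i + j) ((int i + int j + 1 - int k) div 2 + int l))) = det (Mp k n)"
proof -
  let ?H = "mat n n (\<lambda>(i, j). \<Sum>l = 0..k. binom_int (i + j) ((int i + int j + 1 - int k) div 2 + int l))"
  have e1: "mat n n (\<lambda>(i,j). L2 k (Y ^ i * Y ^ j)) = 2 \<cdot>\<^sub>m ?H"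
    by (rule eq_matI) (auto simp: power_add[symmetric] L2_Ypow aa_def)
  have e2: "mat n n (\<lambda>(i,j). L2 k (fp k i * V j)) = 2 \<cdot>\<^sub>m Mp k n"
    by (rule eq_matI) (auto simp: Mp_def L2_fpV L2_fpV0)
  have "det (2 \<cdot>\<^sub>m Mp k n) = det (2 \<cdot>\<^sub>m ?H)"
    using gram_both[of n "fp k" V k] Mon_fp Mon_V unfolding e1 e2 by blast
  hence "2 ^ n * det (Mp k n) = 2 ^ n * det ?H" by (simp add: Mp_def)
  thus ?thesis by simp
qed




lemma det_single_col:
  fixes A :: "int mat"
  assumes A: "A \<in> carrier_mat (Suc m) (Suc m)" and i: "i \<le> m" and j: "j \<le> m"
    and z: "\<And>i'. i' \<le> m \<Longrightarrow> i' \<noteq> i \<Longrightarrow> A $$ (i', j) = 0"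
  shows "det A = A $$ (i, j) * (-1) ^ (i + j) * det (mat_delete A i j)"
proof -
  have "det A = (\<Sum>i'<Suc m. A $$ (i', j) * cofactor A i' j)"
    by (rule laplace_expansion_column[OF A]) (use j in auto)
  also have "\<dots> = A $$ (i, j) * cofactor A i j + (\<Sum>i'\<in>{..<Suc m} - {i}. A $$ (i', j) * cofactor A i' j)"
    by (rule sum.remove) (use i in auto)
  also have "(\<Sum>i'\<in>{..<Suc m} - {i}. A $$ (i', j) * cofactor A i' j) = 0"
    by (rule sum.neutral) (auto simp: z)
  finally show ?thesis by (simp add: cofactor_def)
qed

lemma det_J: "det (mat m m (\<lambda>(i,j). if Suc (i + j) = m then 1 else (0::int))) = (-1) ^ (m choose 2)"
proof (induction m)
  case 0 thus ?case by (simp add: det_dim_zero numeral_2_eq_2)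
next
  case (Suc m)
  let ?A = "mat (Suc m) (Suc m) (\<lambda>(i,j). if Suc (i + j) = Suc m then 1 else (0::int))"
  have "det ?A = ?A $$ (m, 0) * (-1) ^ (m + 0) * det (mat_delete ?A m 0)"
    by (rule det_single_col) auto
  also have "mat_delete ?A m 0 = mat m m (\<lambda>(i,j). if Suc (i + j) = m then 1 else (0::int))"
    by (rule eq_matI) (auto simp: mat_delete_def)
  finally have "det ?A = (-1) ^ m * (-1) ^ (m choose 2)" using Suc by simp
  also have "\<dots> = (-1) ^ (Suc m choose 2)"
    by (simp add: numeral_2_eq_2 power_add)
  finally show ?case .
qed

lemma det_negJ: "det (mat m m (\<lambda>(i,j). - (if Suc (i + j) = m then 1 else (0::int)))) = (-1) ^ m * (-1) ^ (m choose 2)"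
proof -
  have "mat m m (\<lambda>(i,j). - (if Suc (i + j) = m then 1 else (0::int))) = (-1) \<cdot>\<^sub>m mat m m (\<lambda>(i,j). if Suc (i + j) = m then 1 else (0::int))"
    by (rule eq_matI) auto
  thus ?thesis by (simp add: det_J)
qed

lemma det_negI: "det (mat m m (\<lambda>(i,j). - (if j = i then 1 else (0::int)))) = (-1) ^ m"
proof -
  have "mat m m (\<lambda>(i,j). - (if j = i then 1 else (0::int))) = (-1) \<cdot>\<^sub>m 1\<^sub>m m"
    by (rule eq_matI) auto
  thus ?thesis by simp
qed

lemma neg1_double[simp]: "(-1::int) ^ (k + (k + c)) = (-1) ^ c"
proof -
  have "k + (k + c) = 2 * k + c" by simp
  thus ?thesis by (simp only: power_add power_mult) simp
qed

definition AA :: "nat \<Rightarrow> (nat \<Rightarrow> nat) \<Rightarrow> int mat" where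
  "AA k g = mat (Suc k) (Suc k) (\<lambda>(s,j). if s = 0 then 1 else - (if j = g s then 1 else 0))"

lemma AA_iv: assumes "\<And>s. 1 \<le> s \<Longrightarrow> s \<le> k \<Longrightarrow> g s = s" shows "det (AA k g) = (-1) ^ k"
proof -
  have "det (AA k g) = AA k g $$ (0, 0) * (-1) ^ (0 + 0) * det (mat_delete (AA k g) 0 0)"
    by (rule det_single_col) (auto simp: AA_def assms)
  also have "mat_delete (AA k g) 0 0 = mat k k (\<lambda>(i,j). - (if j = i then 1 else (0::int)))"
    by (rule eq_matI) (auto simp: mat_delete_def AA_def assms)
  finally show ?thesis by (simp add: det_negI AA_def)
qed

lemma AA_iii: assumes "\<And>s. 1 \<le> s \<Longrightarrow> s \<le> k \<Longrightarrow> g s = s - 1" shows "det (AA k g) = 1"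
proof -
  have "det (AA k g) = AA k g $$ (0, k) * (-1) ^ (0 + k) * det (mat_delete (AA k g) 0 k)"
    by (rule det_single_col) (auto simp: AA_def assms)
  also have "mat_delete (AA k g) 0 k = mat k k (\<lambda>(i,j). - (if j = i then 1 else (0::int)))"
    by (rule eq_matI) (auto simp: mat_delete_def AA_def assms)
  finally show ?thesis by (simp add: det_negI AA_def flip: power_add)
qed

lemma AA_i: assumes "\<And>s. 1 \<le> s \<Longrightarrow> s \<le> k \<Longrightarrow> g s = k + 1 - s" shows "det (AA k g) = (-1) ^ k * (-1) ^ (k choose 2)"
proof -
  have "det (AA k g) = AA k g $$ (0, 0) * (-1) ^ (0 + 0) * det (mat_delete (AA k g) 0 0)"
    by (rule det_single_col) (auto simp: AA_def assms)
  also have "mat_delete (AA k g) 0 0 = mat k k (\<lambda>(i,j). - (if Suc (i + j) = k then 1 else (0::int)))"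
    by (rule eq_matI) (auto simp: mat_delete_def AA_def assms)
  finally show ?thesis by (simp add: det_negJ AA_def)
qed

lemma AA_ii: assumes "\<And>s. 1 \<le> s \<Longrightarrow> s \<le> k \<Longrightarrow> g s = k - s" shows "det (AA k g) = (-1) ^ (k choose 2)"
proof -
  have "det (AA k g) = AA k g $$ (0, k) * (-1) ^ (0 + k) * det (mat_delete (AA k g) 0 k)"
    by (rule det_single_col) (auto simp: AA_def assms)
  also have "mat_delete (AA k g) 0 k = mat k k (\<lambda>(i,j). - (if Suc (i + j) = k then 1 else (0::int)))"
    by (rule eq_matI) (auto simp: mat_delete_def AA_def assms)
  finally show ?thesis by (simp add: det_negJ AA_def flip: power_add)
qed

lemma AA_bad: assumes "1 \<le> s1" "s1 < s2" "s2 \<le> k" "g s1 = g s2" shows "det (AA k g) = 0"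
proof (rule det_identical_rows)
  show "AA k g \<in> carrier_mat (Suc k) (Suc k)" by (simp add: AA_def)
  show "row (AA k g) s1 = row (AA k g) s2"
    by (rule eq_vecI) (use assms in \<open>auto simp: AA_def\<close>)
qed (use assms in auto)




lemma cc_le: "cc k i \<le> k"
proof -
  define r where "r = (i - 1) mod (2*k+2)"
  have "r < 2*k+2" unfolding r_def by simp
  thus ?thesis unfolding cc_def Let_def r_def[symmetric] by auto
qed

lemma det_Mp_reduce:
  assumes n: "n = a + Suc k"
  shows "det (Mp k n) = (-1) ^ a * (-1) ^ (a * Suc k) * det (AA k (\<lambda>s. cc k (a + s)))"
proof -
  have Mc: "Mp k n \<in> carrier_mat n n" by (simp add: Mp_def)
  define B where "B = mat n n (\<lambda>(i, j). Mp k n $$ (if i < a then i + 1 else if i < 1 + a then i - a else i, j))"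
  have d1: "det (Mp k n) = (-1) ^ (1 * a) * det B"
    unfolding B_def by (rule det_swap_initial_rows[OF Mc]) (use n in simp)
  have Bc: "B \<in> carrier_mat (a + Suc k) (a + Suc k)" using n by (simp add: B_def)
  define C where "C = mat (a + Suc k) (a + Suc k) (\<lambda>(i,j). B $$ (i, if j < a then j + Suc k else j - a))"
  have d2: "det B = (-1) ^ (a * Suc k) * det C"
    unfolding C_def by (rule det_swap_cols[OF Bc])
  define Bm where "Bm = mat a (Suc k) (\<lambda>(i,j). C $$ (i, j + a))"
  have C4: "C = four_block_mat (1\<^sub>m a) Bm (0\<^sub>m (Suc k) a) (AA k (\<lambda>s. cc k (a + s)))"
  proof (rule eq_matI)
    fix i j assume ij: "i < dim_row (four_block_mat (1\<^sub>m a) Bm (0\<^sub>m (Suc k) a) (AA k (\<lambda>s. cc k (a + s))))"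
      "j < dim_col (four_block_mat (1\<^sub>m a) Bm (0\<^sub>m (Suc k) a) (AA k (\<lambda>s. cc k (a + s))))"
    hence ij': "i < a + Suc k" "j < a + Suc k" by (auto simp: Bm_def AA_def)
    have cck: "\<And>x. cc k x \<le> k" by (rule cc_le)
    show "C $$ (i, j) = four_block_mat (1\<^sub>m a) Bm (0\<^sub>m (Suc k) a) (AA k (\<lambda>s. cc k (a + s))) $$ (i, j)"
      using ij' n cck[of "Suc i"] cck[of i] cck[of "a + (i - a)"]
      by (auto simp: C_def B_def Mp_def Bm_def AA_def)
  qed (auto simp: C_def Bm_def AA_def)
  have "det C = det (1\<^sub>m a) * det (AA k (\<lambda>s. cc k (a + s)))"
    unfolding C4 by (rule det_four_block_mat_lower_left_zero) (auto simp: Bm_def AA_def)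
  thus ?thesis using d1 d2 by simp
qed




definition rhs :: "nat \<Rightarrow> nat \<Rightarrow> int" where
  "rhs k n = (if n mod (k + 1) = 0 then (-1) ^ ((n div (k + 1)) * ((k + 1) choose 2))
            else if n mod (k + 1) = 1 then (-1) ^ ((n div (k + 1)) * ((k + 1) choose 2))
            else 0)"

lemma neg1: "(-1::int) ^ x = (if even x then 1 else -1)"
  by (simp add: neg_one_even_power neg_one_odd_power)

lemma dm: "R < d \<Longrightarrow> (d * M + R) mod d = R \<and> (d * M + (R::nat)) div d = M"
  by simp

lemma choose2_Suc: "Suc k choose 2 = k + (k choose 2)"
  by (simp add: numeral_2_eq_2)

lemma cc_shift: assumes "1 \<le> s"
  shows "cc k (a + s) = (let r = (a mod (2*k+2) + (s - 1)) mod (2*k+2) in if r \<le> k then k - r else r - k - 1)"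
proof -
  have "a + s - 1 = a + (s - 1)" using assms by simp
  thus ?thesis unfolding cc_def by (simp add: mod_add_left_eq)
qed

lemma det_Mp_k0: "n \<ge> 1 \<Longrightarrow> det (Mp 0 n) = rhs 0 n"
proof -
  assume "n \<ge> 1"
  then obtain a where n: "n = a + Suc 0" by (metis add.commute le_Suc_ex One_nat_def)
  have "det (AA 0 (\<lambda>s. cc 0 (a + s))) = 1" using AA_iv[of 0 "\<lambda>s. cc 0 (a + s)"] by simp
  hence "det (Mp 0 n) = (-1) ^ a * (-1) ^ a" using det_Mp_reduce[OF n] by simp
  also have "\<dots> = 1" by (simp flip: power_add)
  finally show ?thesis by (simp add: rhs_def numeral_2_eq_2)
qed

lemma det_Mp_small: assumes "k \<ge> 1" "n \<ge> 1" "n \<le> k" shows "det (Mp k n) = rhs k n"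
proof (cases "n = 1")
  case True
  have "det (Mp k 1) = Mp k 1 $$ (0, 0) * (-1) ^ (0 + 0) * det (mat_delete (Mp k 1) 0 0)"
    by (rule det_single_col) (auto simp: Mp_def)
  also have "\<dots> = 1" by (simp add: Mp_def mat_delete_def det_dim_zero)
  finally show ?thesis using True assms by (simp add: rhs_def)
next
  case False
  hence n2: "n \<ge> 2" using assms by auto
  have cc1: "cc k (Suc 0) = k" unfolding cc_def by simp
  have "det (Mp k n) = (\<Sum>j<n. Mp k n $$ (1, j) * cofactor (Mp k n) 1 j)"
    by (rule laplace_expansion_row) (use n2 in \<open>auto simp: Mp_def\<close>)
  also have "\<dots> = 0"
    by (rule sum.neutral) (use n2 assms in \<open>auto simp: Mp_def cc1\<close>)
  finally have "det (Mp k n) = 0" .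
  moreover have "n mod (k + 1) = n" using assms by simp
  ultimately show ?thesis using n2 by (simp add: rhs_def)
qed




lemma det_Mp_large: assumes k1: "k \<ge> 1" and n: "n = a + Suc k" shows "det (Mp k n) = rhs k n"
proof -
  define p where "p = 2*k+2"
  define q where "q = a div p"
  define r0 where "r0 = a mod p"
  have a: "a = p * q + r0" unfolding q_def r0_def by simp
  have r0p: "r0 < p" unfolding r0_def p_def by simp
  define g where "g = (\<lambda>s. cc k (a + s))"
  have gs: "g s = (let r = (r0 + (s - 1)) mod p in if r \<le> k then k - r else r - k - 1)" if "1 \<le> s" for s
    using cc_shift[OF that, of k a] unfolding g_def r0_def p_def by simp
  have red: "det (Mp k n) = (-1) ^ (a * (k + 2)) * det (AA k g)"
  proof -
    have "det (Mp k n) = (-1) ^ a * (-1) ^ (a * Suc k) * det (AA k g)"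
      using det_Mp_reduce[OF n] unfolding g_def by simp
    also have "(-1::int) ^ a * (-1) ^ (a * Suc k) = (-1) ^ (a * (k + 2))"
      by (simp flip: power_add add: algebra_simps)
    finally show ?thesis .
  qed
  have c2: "(k + 1) choose 2 = k + (k choose 2)" using choose2_Suc by simp
  have pe: "p = 2 * (k + 1)" unfolding p_def by simp
  consider "r0 = 0" | "r0 = 1" | "r0 = k + 1" | "r0 = k + 2" | "2 \<le> r0 \<and> r0 \<le> k" | "k + 3 \<le> r0"
    by linarith
  thus ?thesis
  proof cases
    case 1
    have "det (AA k g) = (-1) ^ k * (-1) ^ (k choose 2)"
      by (rule AA_i) (use 1 in \<open>auto simp: gs p_def Let_def\<close>)
    moreover have "even (a * (k + 2))" using a 1 pe by simp
    moreover have nn: "n = (k + 1) * (2 * q + 1) + 0" using n a 1 pe by (simp add: algebra_simps)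
    ultimately show ?thesis using red dm[of 0 "k+1" "2*q+1"] unfolding rhs_def c2 nn
      by (auto simp: neg1 even_add)
  next
    case 2
    have "det (AA k g) = (-1) ^ (k choose 2)"
      by (rule AA_ii) (use 2 in \<open>auto simp: gs p_def Let_def\<close>)
    moreover have "even (a * (k + 2)) \<longleftrightarrow> even k" using a 2 pe by (simp add: even_add)
    moreover have nn: "n = (k + 1) * (2 * q + 1) + 1" using n a 2 pe by (simp add: algebra_simps)
    ultimately show ?thesis using red dm[of 1 "k+1" "2*q+1"] k1 unfolding rhs_def c2 nn
      by (auto simp: neg1 even_add)
  next
    case 3
    have "det (AA k g) = 1"
      by (rule AA_iii) (use 3 in \<open>auto simp: gs p_def Let_def\<close>)
    moreover have "even (a * (k + 2))" using a 3 pe by (simp add: even_add)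
    moreover have nn: "n = (k + 1) * (2 * q + 2) + 0" using n a 3 pe by (simp add: algebra_simps)
    ultimately show ?thesis using red dm[of 0 "k+1" "2*q+2"] unfolding rhs_def nn
      by (auto simp: neg1)
  next
    case 4
    have "det (AA k g) = (-1) ^ k"
      by (rule AA_iv) (use 4 in \<open>auto simp: gs p_def Let_def\<close>)
    moreover have "even (a * (k + 2)) \<longleftrightarrow> even k" using a 4 pe by (simp add: even_add)
    moreover have nn: "n = (k + 1) * (2 * q + 2) + 1" using n a 4 pe by (simp add: algebra_simps)
    ultimately show ?thesis using red dm[of 1 "k+1" "2*q+2"] k1 unfolding rhs_def nn
      by (auto simp: neg1)
  next
    case 5
    have "det (AA k g) = 0"
    proof (rule AA_bad[of "k - r0 + 1" "k - r0 + 2"])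
      show "g (k - r0 + 1) = g (k - r0 + 2)" using 5 by (simp add: gs p_def Let_def)
    qed (use 5 in auto)
    moreover have nn: "n = (k + 1) * (2 * q + 1) + r0" using n a pe by (simp add: algebra_simps)
    ultimately show ?thesis using red dm[of r0 "k+1" "2*q+1"] 5 unfolding rhs_def nn
      by auto
  next
    case 6
    have "det (AA k g) = 0"
    proof (rule AA_bad[of "p - r0" "p - r0 + 1"])
      have "g (p - r0) = k" using 6 r0p by (simp add: gs p_def Let_def)
      moreover have "g (p - r0 + 1) = k"
      proof -
        have "(r0 + (p - r0 + 1 - 1)) mod p = 0" using r0p by simp
        thus ?thesis using gs[of "p - r0 + 1"] by (simp add: Let_def)
      qed
      ultimately show "g (p - r0) = g (p - r0 + 1)" by simp
    qed (use 6 r0p p_def in auto)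
    moreover have nn: "n = (k + 1) * (2 * q + 2) + (r0 - (k + 1))" using n a pe 6 by (simp add: algebra_simps)
    moreover have "r0 - (k + 1) < k + 1" using r0p p_def by simp
    ultimately show ?thesis using red dm[of "r0 - (k + 1)" "k+1" "2*q+2"] 6 unfolding rhs_def nn
      by auto
  qed
qed



theorem corollary13:
  fixes n k :: nat
  assumes "n \<ge> 1"
  shows "det (mat n n (\<lambda>(i, j). \<Sum>l = 0..k.
            binom_int (i + j) ((int i + int j + 1 - int k) div 2 + int l)))
         = (if n mod (k + 1) = 0 then (-1) ^ ((n div (k + 1)) * ((k + 1) choose 2))
            else if n mod (k + 1) = 1 then (-1) ^ ((n div (k + 1)) * ((k + 1) choose 2))
            else (0::int))"
proof -
  have "det (Mp k n) = rhs k n"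
  proof (cases "k = 0")
    case True thus ?thesis using det_Mp_k0[OF assms] by simp
  next
    case False
    hence k1: "k \<ge> 1" by simp
    show ?thesis
    proof (cases "n \<le> k")
      case True thus ?thesis by (rule det_Mp_small[OF k1 assms])
    next
      case False
      have "n = (n - Suc k) + Suc k" using False by simp
      thus ?thesis by (rule det_Mp_large[OF k1])
    qed
  qed
  thus ?thesis unfolding det_H_Mp rhs_def .
qed

end
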